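(* For $\tau > 0$ let $P_\tau$ denote the $\mathrm{L}^2(\mathbb{R})$-orthogonal projection onto the functions that are constant on each interval $]k\tau, (k+1)\tau[$, $k \in \mathbb{Z}$. There exists $C>0$ such that for all $\tau > 0$ and all $u \in \mathrm{H}^{1/2}(\mathbb{R})$, $P_\tau u \in \mathrm{H}^{1/2}_w(\mathbb{R})$ and $$\|P_\tau u\|_{\mathrm{L}^2} + |P_\tau u|_{\mathrm{H}^{1/2}_w} \leq C \left(\|u\|_{\mathrm{L}^2} + |u|_{\mathrm{H}^{1/2}}\right).$$
   Context: $\mathrm{H}^{1/2}(\mathbb{R})$ is the usual Sobolev space, with seminorm $|u|_{\mathrm{H}^{1/2}}$ (e.g. the Slobodetski seminorm $|u|_{\mathrm{H}^{s}}^2 = \iint_{\mathbb{R}^2} \frac{|u(x+y)-u(x)|^2}{|y|^{1+2s}}\,\mathrm{d}x\,\mathrm{d}y$ with $s=1/2$, or the equivalent Fourier seminorm $\int |\xi|\,|\mathcal{F}u(\xi)|^2\mathrm{d}\xi$). The space $\mathrm{H}^{1/2}_w(\mathbb{R})$ consists of $u \in \mathrm{L}^2(\mathbb{R})$ for which there is $C \geq 0$ with $\|u - \tau_y u\|_{\mathrm{L}^2} \leq C|y|^{1/2}$ for all $y \in \mathbb{R}$, where $\tau_y u = u(\cdot + y)$ denotes translation by $y$; the best such constant $C$ is denoted $|u|_{\mathrm{H}^{1/2}_w}$. *)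

theory Defs
  imports "HOL-Analysis.Analysis"
begin

definition L2_fun :: "(real \<Rightarrow> real) \<Rightarrow> bool" where
  "L2_fun u \<longleftrightarrow> u \<in> borel_measurable lborel \<and> integrable lborel (\<lambda>x. (u x)\<^sup>2)"

definition L2_norm :: "(real \<Rightarrow> real) \<Rightarrow> real" where
  "L2_norm u = sqrt (integral\<^sup>L lborel (\<lambda>x. (u x)\<^sup>2))"

text \<open>Slobodetski double integral for s = 1/2 (|y|^(1+2s) = y^2).\<close>
definition H12_energy :: "(real \<Rightarrow> real) \<Rightarrow> ennreal" where
  "H12_energy u = (\<integral>\<^sup>+ z. ennreal ((u (fst z + snd z) - u (fst z))\<^sup>2 / (snd z)\<^sup>2) \<partial>(lborel :: (real \<times> real) measure))"

definition H12 :: "(real \<Rightarrow> real) \<Rightarrow> bool" where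
  "H12 u \<longleftrightarrow> L2_fun u \<and> H12_energy u < \<infinity>"

definition H12_semi :: "(real \<Rightarrow> real) \<Rightarrow> real" where
  "H12_semi u = sqrt (enn2real (H12_energy u))"

definition transl :: "real \<Rightarrow> (real \<Rightarrow> real) \<Rightarrow> (real \<Rightarrow> real)" where
  "transl y u = (\<lambda>x. u (x + y))"

definition H12w_consts :: "(real \<Rightarrow> real) \<Rightarrow> real set" where
  "H12w_consts u = {C. C \<ge> 0 \<and> (\<forall>y. L2_norm (\<lambda>x. u x - transl y u x) \<le> C * sqrt \<bar>y\<bar>)}"

definition H12w :: "(real \<Rightarrow> real) \<Rightarrow> bool" where
  "H12w u \<longleftrightarrow> L2_fun u \<and> H12w_consts u \<noteq> {}"

definition H12w_semi :: "(real \<Rightarrow> real) \<Rightarrow> real" where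
  "H12w_semi u = Inf (H12w_consts u)"

text \<open>L2-orthogonal projection onto functions constant on each ]k tau,(k+1) tau[:
  the average of u over the cell containing x (the value on the null set of
  grid points is irrelevant).\<close>
definition P_proj :: "real \<Rightarrow> (real \<Rightarrow> real) \<Rightarrow> (real \<Rightarrow> real)" where
  "P_proj \<tau> u = (\<lambda>x. let k = real_of_int \<lfloor>x / \<tau>\<rfloor> in
      (1 / \<tau>) * (LBINT t=k * \<tau>..(k + 1) * \<tau>. u t))"

end

theory Submission
  imports Defs
begin


definition cellI :: "real \<Rightarrow> real \<Rightarrow> real set" where
  "cellI \<tau> x = {real_of_int \<lfloor>x/\<tau>\<rfloor> * \<tau> <..< (real_of_int \<lfloor>x/\<tau>\<rfloor> + 1) * \<tau>}"

lemma P_proj_eq: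
  assumes "\<tau> > 0"
  shows "P_proj \<tau> u x = (1/\<tau>) * integral\<^sup>L lborel (\<lambda>s. indicator (cellI \<tau> x) s * u s)"
  using assms unfolding P_proj_def cellI_def Let_def
  by (simp add: interval_lebesgue_integral_def set_lebesgue_integral_def mult_right_mono)

lemma cellI_floor:
  assumes "\<tau> > 0" "s \<in> cellI \<tau> x"
  shows "\<lfloor>s/\<tau>\<rfloor> = \<lfloor>x/\<tau>\<rfloor>"
proof -
  from assms have "real_of_int \<lfloor>x/\<tau>\<rfloor> < s/\<tau>" "s/\<tau> < real_of_int \<lfloor>x/\<tau>\<rfloor> + 1"
    by (auto simp: cellI_def field_simps)
  then show ?thesis by (intro floor_unique) auto
qed

lemma floor_bounds:
  assumes "\<tau> > 0"
  shows "real_of_int \<lfloor>x/\<tau>\<rfloor> * \<tau> \<le> x \<and> x < (real_of_int \<lfloor>x/\<tau>\<rfloor> + 1)*\<tau>"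
proof -
  have "real_of_int \<lfloor>x/\<tau>\<rfloor> \<le> x/\<tau>" "x/\<tau> < real_of_int \<lfloor>x/\<tau>\<rfloor> + 1" by linarith+
  then show ?thesis using assms pos_le_divide_eq pos_divide_less_eq by blast
qed

lemma cellI_dist:
  assumes "\<tau> > 0" "s \<in> cellI \<tau> x"
  shows "\<bar>s - x\<bar> < \<tau>"
proof -
  have "real_of_int \<lfloor>x/\<tau>\<rfloor> \<le> x/\<tau>" "x/\<tau> < real_of_int \<lfloor>x/\<tau>\<rfloor> + 1" by linarith+
  then have "real_of_int \<lfloor>x/\<tau>\<rfloor> * \<tau> \<le> x" "x < (real_of_int \<lfloor>x/\<tau>\<rfloor> + 1)*\<tau>"
    using assms(1) pos_le_divide_eq pos_divide_less_eq by blast+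
  with assms show ?thesis by (auto simp: cellI_def distrib_right abs_less_iff)
qed

lemma emeasure_cellI: "\<tau> > 0 \<Longrightarrow> emeasure lborel (cellI \<tau> x) = ennreal \<tau>"
  by (simp add: cellI_def algebra_simps)

lemma cellI_meas[measurable]:
  "Measurable.pred (lborel \<Otimes>\<^sub>M lborel) (\<lambda>z. snd z \<in> cellI \<tau> (fst z))"
  unfolding cellI_def by (simp add: greaterThanLessThan_iff) measurable

lemma CS_cell:
  fixes g :: "real \<Rightarrow> real"
  assumes A[measurable]: "A \<in> sets lborel" and mA: "emeasure lborel A = ennreal \<tau>" and tp: "\<tau> > 0"
    and g[measurable]: "g \<in> borel_measurable lborel"
    and int: "integrable lborel (\<lambda>s. indicator A s * g s)"
  shows "ennreal (((1/\<tau>) * integral\<^sup>L lborel (\<lambda>s. indicator A s * g s))\<^sup>2)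
     \<le> ennreal (1/\<tau>) * (\<integral>\<^sup>+s. indicator A s * ennreal ((g s)\<^sup>2) \<partial>lborel)"
proof (cases "(\<integral>\<^sup>+s. indicator A s * ennreal ((g s)\<^sup>2) \<partial>lborel) = \<infinity>")
  case True
  then show ?thesis using tp by (simp add: ennreal_mult_top)
next
  case False
  have eq1: "(\<lambda>s. indicator A s * ennreal ((g s)\<^sup>2)) = (\<lambda>s. ennreal (indicator A s * (g s)\<^sup>2))"
    by (auto simp: indicator_def)
  have "(\<integral>\<^sup>+s. ennreal (norm (indicator A s * (g s)\<^sup>2)) \<partial>lborel) < \<infinity>"
  proof -
    have "(\<integral>\<^sup>+s. ennreal (norm (indicator A s * (g s)\<^sup>2)) \<partial>lborel) = (\<integral>\<^sup>+s. indicator A s * ennreal ((g s)\<^sup>2) \<partial>lborel)"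
      by (intro nn_integral_cong) (auto simp: indicator_def)
    then show ?thesis using False by (simp add: top.not_eq_extremum)
  qed
  then have int2: "integrable lborel (\<lambda>s. indicator A s * (g s)\<^sup>2)"
    by (intro integrableI_bounded) auto
  have fin: "emeasure lborel A < \<infinity>" using mA by simp
  have int0: "integrable lborel (\<lambda>s. indicator A s :: real)"
    using fin A by (simp add: integrable_indicator_iff)
  have mAr: "measure lborel A = \<tau>" using mA tp by (simp add: measure_def)
  define I1 where "I1 = integral\<^sup>L lborel (\<lambda>s. indicator A s * g s)"
  define I2 where "I2 = integral\<^sup>L lborel (\<lambda>s. indicator A s * (g s)\<^sup>2)"
  define m where "m = I1 / \<tau>"
  have "0 \<le> integral\<^sup>L lborel (\<lambda>s. indicator A s * (g s - m)\<^sup>2)"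
    by (intro integral_nonneg_AE) auto
  also have "(\<lambda>s. indicator A s * (g s - m)\<^sup>2) = (\<lambda>s. indicator A s * (g s)\<^sup>2 - 2 * m * (indicator A s * g s) + m\<^sup>2 * indicator A s)"
    by (auto simp: fun_eq_iff power2_eq_square algebra_simps)
  also have "integral\<^sup>L lborel \<dots> = I2 - 2 * m * I1 + m\<^sup>2 * \<tau>"
    using int int2 int0 mAr unfolding I1_def I2_def by simp
  finally have "I1\<^sup>2 / \<tau> \<le> I2" using tp unfolding m_def by (simp add: field_simps power2_eq_square)
  then have le: "((1/\<tau>) * I1)\<^sup>2 \<le> (1/\<tau>) * I2" using tp by (simp add: field_simps power2_eq_square)
  have "(\<integral>\<^sup>+s. indicator A s * ennreal ((g s)\<^sup>2) \<partial>lborel) = ennreal I2"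
    unfolding eq1 I2_def by (intro nn_integral_eq_integral int2) auto
  moreover have I2nn: "0 \<le> I2" unfolding I2_def by (intro integral_nonneg_AE) auto
  moreover have "ennreal (1/\<tau>) * ennreal I2 = ennreal (1/\<tau> * I2)" using tp I2nn by (subst ennreal_mult[symmetric]) auto
  ultimately show ?thesis using le unfolding I1_def[symmetric]
    by (metis ennreal_leI)
qed

lemma nn_shift:
  fixes f :: "real \<Rightarrow> ennreal"
  assumes [measurable]: "f \<in> borel_measurable borel"
  shows "(\<integral>\<^sup>+x. f (x + y) \<partial>lborel) = (\<integral>\<^sup>+x. f x \<partial>lborel)"
  using nn_integral_real_affine[OF assms, of 1 y] by (simp add: add.commute)

lemma nn_refl:
  fixes f :: "real \<Rightarrow> ennreal"
  assumes [measurable]: "f \<in> borel_measurable borel"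
  shows "(\<integral>\<^sup>+x. f (y - x) \<partial>lborel) = (\<integral>\<^sup>+x. f x \<partial>lborel)"
  using nn_integral_real_affine[OF assms, of "-1" y] by simp

lemma cellI_set_meas: "{z \<in> space (lborel \<Otimes>\<^sub>M lborel). snd z \<in> cellI \<tau> (fst z)} \<in> sets (lborel \<Otimes>\<^sub>M lborel)"
  using cellI_meas[of \<tau>] by (simp add: pred_def)

lemma cellI_ind_meas[measurable]:
  "(\<lambda>z. indicator (cellI \<tau> (fst z)) (snd z) :: real) \<in> borel_measurable (lborel \<Otimes>\<^sub>M lborel)"
  "(\<lambda>z. indicator (cellI \<tau> (fst z)) (snd z) :: ennreal) \<in> borel_measurable (lborel \<Otimes>\<^sub>M lborel)"
  unfolding indicator_def of_bool_def
  by (rule measurable_If[OF measurable_const measurable_const cellI_set_meas]; simp)+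


lemma cellI_ind_le:
  assumes "\<tau> > 0"
  shows "(\<integral>\<^sup>+x. indicator (cellI \<tau> x) s \<partial>lborel) \<le> ennreal \<tau>"
proof -
  define k where "k = real_of_int \<lfloor>s/\<tau>\<rfloor>"
  have "(\<integral>\<^sup>+x. indicator (cellI \<tau> x) s \<partial>lborel) \<le> (\<integral>\<^sup>+x. indicator {k*\<tau>..(k+1)*\<tau>} x \<partial>lborel)"
  proof (intro nn_integral_mono)
    fix x
    show "indicator (cellI \<tau> x) s \<le> (indicator {k*\<tau>..(k+1)*\<tau>} x :: ennreal)"
    proof (cases "s \<in> cellI \<tau> x")
      case True
      then have "\<lfloor>s/\<tau>\<rfloor> = \<lfloor>x/\<tau>\<rfloor>" using cellI_floor assms by blast
      moreover have "real_of_int \<lfloor>x/\<tau>\<rfloor> * \<tau> \<le> x" "x < (real_of_int \<lfloor>x/\<tau>\<rfloor> + 1)*\<tau>"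
        using floor_bounds[OF assms] by auto
      ultimately have "k*\<tau> \<le> x" "x < (k+1)*\<tau>" unfolding k_def by simp_all
      then show ?thesis by (simp add: indicator_def)
    qed simp
  qed
  also have "\<dots> = ennreal \<tau>" using assms by (simp add: algebra_simps)
  finally show ?thesis .
qed

lemma abs_le_sq1: "\<bar>t::real\<bar> \<le> t\<^sup>2 + 1"
proof (cases "\<bar>t\<bar> \<le> 1")
  case True then show ?thesis by (smt (verit) zero_le_power2)
next
  case False
  then have "\<bar>t\<bar> * 1 \<le> \<bar>t\<bar> * \<bar>t\<bar>" by (intro mult_left_mono) auto
  then show ?thesis by (simp add: power2_eq_square abs_mult_self_eq)
qed

lemma integrable_on_finite:
  fixes u :: "real \<Rightarrow> real"
  assumes "L2_fun u" and A[measurable]: "A \<in> sets lborel" and fin: "emeasure lborel A < \<infinity>"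
  shows "integrable lborel (\<lambda>s. indicator A s * u s)"
proof -
  have um[measurable]: "u \<in> borel_measurable borel" using assms(1) by (simp add: L2_fun_def)
  have i2: "integrable lborel (\<lambda>x. (u x)\<^sup>2)" using assms(1) by (simp add: L2_fun_def)
  have i0: "integrable lborel (\<lambda>s. indicator A s :: real)"
    using fin A by (simp add: integrable_indicator_iff)
  have "integrable lborel (\<lambda>s. (u s)\<^sup>2 + indicator A s)" using i2 i0 by simp
  then show ?thesis
  proof (rule Bochner_Integration.integrable_bound)
    show "(\<lambda>s. indicator A s * u s) \<in> borel_measurable lborel" by measurable
    show "AE x in lborel. norm (indicator A x * u x) \<le> norm ((u x)\<^sup>2 + indicator A x)"
    proof (intro AE_I2)
      fix x
      have "\<bar>u x\<bar> \<le> (u x)\<^sup>2 + 1" by (rule abs_le_sq1)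
      then show "norm (indicator A x * u x) \<le> norm ((u x)\<^sup>2 + indicator A x)"
        by (auto simp: indicator_def)
    qed
  qed
qed




lemma sq_le_scaled:
  fixes v d T :: real
  assumes "\<bar>d\<bar> \<le> T" "d = 0 \<Longrightarrow> v = 0"
  shows "v\<^sup>2 \<le> T\<^sup>2 * (v\<^sup>2 / d\<^sup>2)"
proof (cases "d = 0")
  case True then show ?thesis using assms by simp
next
  case False
  have "d\<^sup>2 \<le> T\<^sup>2" using assms(1) by (metis abs_ge_zero order_trans power2_abs power_mono)
  then have "v\<^sup>2 / d\<^sup>2 * d\<^sup>2 \<le> v\<^sup>2 / d\<^sup>2 * T\<^sup>2" by (intro mult_left_mono) auto
  then show ?thesis using False by (simp add: mult.commute)
qed

lemma L2_norm_nn: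
  assumes [measurable]: "f \<in> borel_measurable borel"
  shows "L2_norm f = sqrt (enn2real (\<integral>\<^sup>+x. ennreal ((f x)\<^sup>2) \<partial>lborel))"
  unfolding L2_norm_def by (subst integral_eq_nn_integral) auto

lemma cellI_ind_x[measurable]: "(\<lambda>x. indicator (cellI \<tau> x) s :: ennreal) \<in> borel_measurable borel"
proof -
  have "(\<lambda>x. (x, s)) \<in> measurable lborel (lborel \<Otimes>\<^sub>M lborel)" by measurable
  from measurable_compose[OF this cellI_ind_meas(2)] show ?thesis by simp
qed

definition Gf :: "(real \<Rightarrow> real) \<Rightarrow> real \<Rightarrow> ennreal" where
  "Gf u x = (\<integral>\<^sup>+z. ennreal ((u (x + z) - u x)\<^sup>2 / z\<^sup>2) \<partial>lborel)"

locale stp =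
  fixes \<tau> :: real and u :: "real \<Rightarrow> real"
  assumes tp: "\<tau> > 0" and uL2: "L2_fun u"
begin

lemma um[measurable]: "u \<in> borel_measurable borel" using uL2 by (simp add: L2_fun_def)

lemma int_cell: "integrable lborel (\<lambda>s. indicator (cellI \<tau> x) s * u s)"
  by (rule integrable_on_finite[OF uL2]) (auto simp: emeasure_cellI tp, auto simp: cellI_def)

lemma prod_meas: "(\<lambda>(x,s). indicator (cellI \<tau> x) s * u s) \<in> borel_measurable (lborel \<Otimes>\<^sub>M lborel)"
  unfolding case_prod_beta by measurable

lemma a_meas[measurable]: "P_proj \<tau> u \<in> borel_measurable borel"
proof -
  have "(\<lambda>x. (1/\<tau>) * integral\<^sup>L lborel (\<lambda>s. indicator (cellI \<tau> x) s * u s)) \<in> borel_measurable lborel"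
    using lborel.borel_measurable_lebesgue_integral[OF prod_meas] by measurable
  moreover have "P_proj \<tau> u = (\<lambda>x. (1/\<tau>) * integral\<^sup>L lborel (\<lambda>s. indicator (cellI \<tau> x) s * u s))"
    using P_proj_eq[OF tp] by auto
  ultimately show ?thesis by simp
qed

lemma a_sq: "(\<integral>\<^sup>+x. ennreal ((P_proj \<tau> u x)\<^sup>2) \<partial>lborel) \<le> (\<integral>\<^sup>+x. ennreal ((u x)\<^sup>2) \<partial>lborel)"
proof -
  have pt: "ennreal ((P_proj \<tau> u x)\<^sup>2) \<le> ennreal (1/\<tau>) * (\<integral>\<^sup>+s. indicator (cellI \<tau> x) s * ennreal ((u s)\<^sup>2) \<partial>lborel)" for x
    unfolding P_proj_eq[OF tp]
    by (rule CS_cell) (auto simp: emeasure_cellI tp int_cell, auto simp: cellI_def)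
  have "(\<integral>\<^sup>+x. ennreal ((P_proj \<tau> u x)\<^sup>2) \<partial>lborel)
      \<le> (\<integral>\<^sup>+x. ennreal (1/\<tau>) * (\<integral>\<^sup>+s. indicator (cellI \<tau> x) s * ennreal ((u s)\<^sup>2) \<partial>lborel) \<partial>lborel)"
    by (intro nn_integral_mono pt)
  also have "\<dots> = ennreal (1/\<tau>) * (\<integral>\<^sup>+x. \<integral>\<^sup>+s. indicator (cellI \<tau> x) s * ennreal ((u s)\<^sup>2) \<partial>lborel \<partial>lborel)"
    by (rule nn_integral_cmult) measurable
  also have "(\<integral>\<^sup>+x. \<integral>\<^sup>+s. indicator (cellI \<tau> x) s * ennreal ((u s)\<^sup>2) \<partial>lborel \<partial>lborel)
      = (\<integral>\<^sup>+s. \<integral>\<^sup>+x. indicator (cellI \<tau> x) s * ennreal ((u s)\<^sup>2) \<partial>lborel \<partial>lborel)"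
    by (rule lborel_pair.Fubini'[symmetric]) (unfold case_prod_beta, measurable)
  also have "\<dots> = (\<integral>\<^sup>+s. (\<integral>\<^sup>+x. indicator (cellI \<tau> x) s \<partial>lborel) * ennreal ((u s)\<^sup>2) \<partial>lborel)"
    by (intro nn_integral_cong nn_integral_multc) auto
  also have "ennreal (1/\<tau>) * \<dots> \<le> ennreal (1/\<tau>) * (\<integral>\<^sup>+s. ennreal \<tau> * ennreal ((u s)\<^sup>2) \<partial>lborel)"
    by (intro mult_left_mono nn_integral_mono mult_right_mono cellI_ind_le tp) auto
  also have "(\<integral>\<^sup>+s. ennreal \<tau> * ennreal ((u s)\<^sup>2) \<partial>lborel) = ennreal \<tau> * (\<integral>\<^sup>+s. ennreal ((u s)\<^sup>2) \<partial>lborel)"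
    by (rule nn_integral_cmult) measurable
  finally show ?thesis using tp
    by (simp add: mult.assoc[symmetric] ennreal_mult[symmetric])
qed

lemma Gf_prod_meas: "(\<lambda>(x,z). ennreal ((u (x + z) - u x)\<^sup>2 / z\<^sup>2)) \<in> borel_measurable (lborel \<Otimes>\<^sub>M lborel)"
  unfolding case_prod_beta by measurable

lemma Gf_meas[measurable]: "Gf u \<in> borel_measurable borel"
proof -
  have "(\<lambda>x. \<integral>\<^sup>+z. ennreal ((u (x + z) - u x)\<^sup>2 / z\<^sup>2) \<partial>lborel) \<in> borel_measurable lborel"
    by (rule lborel.borel_measurable_nn_integral) (use Gf_prod_meas in \<open>simp add: split_beta'\<close>)
  then show ?thesis unfolding Gf_def[abs_def] by simp
qed

lemma D_eq: "H12_energy u = (\<integral>\<^sup>+x. Gf u x \<partial>lborel)"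
proof -
  have m: "(\<lambda>z. ennreal ((u (fst z + snd z) - u (fst z))\<^sup>2 / (snd z)\<^sup>2)) \<in> borel_measurable (lborel \<Otimes>\<^sub>M lborel)"
    by measurable
  show ?thesis
    unfolding H12_energy_def Gf_def lborel_prod[symmetric]
    using lborel.nn_integral_fst[OF m] by simp
qed

lemma integral_cell_ind: "integral\<^sup>L lborel (\<lambda>s. indicator (cellI \<tau> x) s :: real) = \<tau>"
  using emeasure_cellI[OF tp, of x] tp by (simp add: measure_def)

lemma integrable_cell_ind: "integrable lborel (\<lambda>s. indicator (cellI \<tau> x) s :: real)"
  using emeasure_cellI[OF tp, of x] by (simp add: integrable_indicator_iff, simp add: cellI_def)

lemma au_point: "ennreal ((P_proj \<tau> u x - u x)\<^sup>2) \<le> ennreal \<tau> * Gf u x"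
proof -
  have i1: "integrable lborel (\<lambda>s. indicator (cellI \<tau> x) s * (u s - u x))"
  proof -
    have "integrable lborel (\<lambda>s. indicator (cellI \<tau> x) s * u s - u x * indicator (cellI \<tau> x) s)"
      using int_cell integrable_cell_ind by auto
    then show ?thesis by (simp add: algebra_simps)
  qed
  have "integral\<^sup>L lborel (\<lambda>s. indicator (cellI \<tau> x) s * (u s - u x))
      = integral\<^sup>L lborel (\<lambda>s. indicator (cellI \<tau> x) s * u s - u x * indicator (cellI \<tau> x) s)"
    by (simp add: algebra_simps)
  also have "\<dots> = integral\<^sup>L lborel (\<lambda>s. indicator (cellI \<tau> x) s * u s) - u x * \<tau>"
    using int_cell integrable_cell_ind integral_cell_ind by simp
  finally have eq: "P_proj \<tau> u x - u x = (1/\<tau>) * integral\<^sup>L lborel (\<lambda>s. indicator (cellI \<tau> x) s * (u s - u x))"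
    unfolding P_proj_eq[OF tp] using tp by (simp add: field_simps)
  have "ennreal ((P_proj \<tau> u x - u x)\<^sup>2) \<le> ennreal (1/\<tau>) * (\<integral>\<^sup>+s. indicator (cellI \<tau> x) s * ennreal ((u s - u x)\<^sup>2) \<partial>lborel)"
    unfolding eq by (rule CS_cell) (auto simp: emeasure_cellI tp i1, auto simp: cellI_def)
  also have "(\<integral>\<^sup>+s. indicator (cellI \<tau> x) s * ennreal ((u s - u x)\<^sup>2) \<partial>lborel)
      \<le> (\<integral>\<^sup>+s. ennreal (\<tau>\<^sup>2) * ennreal ((u s - u x)\<^sup>2 / (s - x)\<^sup>2) \<partial>lborel)"
  proof (intro nn_integral_mono)
    fix s
    show "indicator (cellI \<tau> x) s * ennreal ((u s - u x)\<^sup>2) \<le> ennreal (\<tau>\<^sup>2) * ennreal ((u s - u x)\<^sup>2 / (s - x)\<^sup>2)"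
    proof (cases "s \<in> cellI \<tau> x")
      case True
      have "(u s - u x)\<^sup>2 \<le> \<tau>\<^sup>2 * ((u s - u x)\<^sup>2 / (s - x)\<^sup>2)"
        using cellI_dist[OF tp True] by (intro sq_le_scaled) auto
      then show ?thesis using True by (simp add: ennreal_mult[symmetric] ennreal_leI)
    qed simp
  qed
  also have "\<dots> = ennreal (\<tau>\<^sup>2) * (\<integral>\<^sup>+s. ennreal ((u s - u x)\<^sup>2 / (s - x)\<^sup>2) \<partial>lborel)"
    by (rule nn_integral_cmult) measurable
  also have "(\<integral>\<^sup>+s. ennreal ((u s - u x)\<^sup>2 / (s - x)\<^sup>2) \<partial>lborel) = Gf u x"
  proof -
    have "(\<integral>\<^sup>+s. ennreal ((u s - u x)\<^sup>2 / (s - x)\<^sup>2) \<partial>lborel) = (\<integral>\<^sup>+z. ennreal ((u (z + x) - u x)\<^sup>2 / (z + x - x)\<^sup>2) \<partial>lborel)"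
      by (rule nn_shift[symmetric]) measurable
    then show ?thesis unfolding Gf_def by (simp add: add.commute)
  qed
  finally have "ennreal ((P_proj \<tau> u x - u x)\<^sup>2) \<le> ennreal (1/\<tau>) * (ennreal (\<tau>\<^sup>2) * Gf u x)"
    by (simp add: mult_left_mono)
  also have "\<dots> = ennreal \<tau> * Gf u x"
    using tp by (simp add: mult.assoc[symmetric] ennreal_mult[symmetric] power2_eq_square)
  finally show ?thesis .
qed

lemma au_bound: "(\<integral>\<^sup>+x. ennreal ((P_proj \<tau> u x - u x)\<^sup>2) \<partial>lborel) \<le> ennreal \<tau> * (\<integral>\<^sup>+x. Gf u x \<partial>lborel)"
proof -
  have "(\<integral>\<^sup>+x. ennreal ((P_proj \<tau> u x - u x)\<^sup>2) \<partial>lborel) \<le> (\<integral>\<^sup>+x. ennreal \<tau> * Gf u x \<partial>lborel)"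
    by (intro nn_integral_mono au_point)
  also have "\<dots> = ennreal \<tau> * (\<integral>\<^sup>+x. Gf u x \<partial>lborel)"
    by (rule nn_integral_cmult) measurable
  finally show ?thesis .
qed

end


context stp begin

definition gf :: "real \<Rightarrow> ennreal" where
  "gf y = (\<integral>\<^sup>+x. ennreal ((u (x + y) - u x)\<^sup>2) \<partial>lborel)"

definition Hz :: "real \<Rightarrow> ennreal" where
  "Hz z = (\<integral>\<^sup>+x. ennreal ((u (x + z) - u x)\<^sup>2 / z\<^sup>2) \<partial>lborel)"

lemma gf_meas[measurable]: "gf \<in> borel_measurable borel"
proof -
  have "(\<lambda>y. \<integral>\<^sup>+x. ennreal ((u (x + y) - u x)\<^sup>2) \<partial>lborel) \<in> borel_measurable lborel"
    by (rule lborel.borel_measurable_nn_integral) (simp add: split_beta', measurable)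
  then show ?thesis unfolding gf_def[abs_def] by simp
qed

lemma Hz_int: "(\<integral>\<^sup>+z. Hz z \<partial>lborel) = (\<integral>\<^sup>+x. Gf u x \<partial>lborel)"
  unfolding Hz_def Gf_def
  by (rule lborel_pair.Fubini') (simp add: split_beta', measurable)

lemma sq_sum_le: "((p::real) + q)\<^sup>2 \<le> 2 * p\<^sup>2 + 2 * q\<^sup>2"
proof -
  have "0 \<le> (p - q)\<^sup>2" by simp
  then show ?thesis by (simp add: power2_eq_square algebra_simps)
qed

lemma gf_tri: "gf y \<le> 2 * gf z + 2 * gf (y - z)"
proof -
  have "gf y \<le> (\<integral>\<^sup>+x. ennreal (2 * (u (x + y) - u (x + z))\<^sup>2) + ennreal (2 * (u (x + z) - u x)\<^sup>2) \<partial>lborel)"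
    unfolding gf_def
  proof (intro nn_integral_mono)
    fix x
    have "(u (x + y) - u x)\<^sup>2 \<le> 2 * (u (x + y) - u (x + z))\<^sup>2 + 2 * (u (x + z) - u x)\<^sup>2"
      using sq_sum_le[of "u (x + y) - u (x + z)" "u (x + z) - u x"] by simp
    then show "ennreal ((u (x + y) - u x)\<^sup>2) \<le> ennreal (2 * (u (x + y) - u (x + z))\<^sup>2) + ennreal (2 * (u (x + z) - u x)\<^sup>2)"
      by (simp add: ennreal_plus[symmetric] ennreal_leI del: ennreal_plus)
  qed
  also have "\<dots> = (\<integral>\<^sup>+x. ennreal (2 * (u (x + y) - u (x + z))\<^sup>2) \<partial>lborel) + (\<integral>\<^sup>+x. ennreal (2 * (u (x + z) - u x)\<^sup>2) \<partial>lborel)"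
    by (rule nn_integral_add) measurable
  also have "(\<integral>\<^sup>+x. ennreal (2 * (u (x + y) - u (x + z))\<^sup>2) \<partial>lborel) = 2 * (\<integral>\<^sup>+x. ennreal ((u (x + y) - u (x + z))\<^sup>2) \<partial>lborel)"
    by (subst nn_integral_cmult[symmetric]) (auto simp: ennreal_mult)
  also have "(\<integral>\<^sup>+x. ennreal (2 * (u (x + z) - u x)\<^sup>2) \<partial>lborel) = 2 * gf z"
    unfolding gf_def by (subst nn_integral_cmult[symmetric]) (auto simp: ennreal_mult)
  also have "(\<integral>\<^sup>+x. ennreal ((u (x + y) - u (x + z))\<^sup>2) \<partial>lborel) = gf (y - z)"
  proof -
    have "(\<integral>\<^sup>+x. ennreal ((u (x + z + (y - z)) - u (x + z))\<^sup>2) \<partial>lborel) = (\<integral>\<^sup>+w. ennreal ((u (w + (y - z)) - u w)\<^sup>2) \<partial>lborel)"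
      by (rule nn_shift[where f="\<lambda>w. ennreal ((u (w + (y - z)) - u w)\<^sup>2)"]) measurable
    then show ?thesis unfolding gf_def by (simp add: algebra_simps)
  qed
  finally show ?thesis by (simp add: add.commute)
qed

lemma gf_bound: "gf y \<le> ennreal (4 * \<bar>y\<bar>) * (\<integral>\<^sup>+x. Gf u x \<partial>lborel)"
proof (cases "y = 0")
  case True
  then show ?thesis by (simp add: gf_def)
next
  case False
  define S where "S = {min 0 y .. max 0 y}"
  have Sm[measurable]: "S \<in> sets borel" unfolding S_def by simp
  have eS: "emeasure lborel S = ennreal \<bar>y\<bar>"
  proof -
    have "max 0 y - min 0 y = \<bar>y\<bar>" by linarith
    then show ?thesis unfolding S_def by (subst emeasure_lborel_Icc) auto
  qed
  have Sref: "indicator S (y - z) = (indicator S z :: ennreal)" for z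
  proof -
    have "(y - z \<in> S) = (z \<in> S)" unfolding S_def by (cases "0 \<le> y") auto
    then show ?thesis by (simp add: indicator_def)
  qed
  have "(\<integral>\<^sup>+z. indicator S z * gf z \<partial>lborel) \<le> (\<integral>\<^sup>+z. ennreal (y\<^sup>2) * Hz z \<partial>lborel)"
  proof (intro nn_integral_mono)
    fix z
    show "indicator S z * gf z \<le> ennreal (y\<^sup>2) * Hz z"
    proof (cases "z \<in> S")
      case True
      then have zy: "\<bar>z\<bar> \<le> \<bar>y\<bar>" unfolding S_def by (cases "0 \<le> y") auto
      have "gf z \<le> (\<integral>\<^sup>+x. ennreal (y\<^sup>2) * ennreal ((u (x + z) - u x)\<^sup>2 / z\<^sup>2) \<partial>lborel)"
        unfolding gf_def
      proof (intro nn_integral_mono)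
        fix x
        have "(u (x + z) - u x)\<^sup>2 \<le> \<bar>y\<bar>\<^sup>2 * ((u (x + z) - u x)\<^sup>2 / z\<^sup>2)"
          using zy by (intro sq_le_scaled) auto
        then show "ennreal ((u (x + z) - u x)\<^sup>2) \<le> ennreal (y\<^sup>2) * ennreal ((u (x + z) - u x)\<^sup>2 / z\<^sup>2)"
          by (simp add: ennreal_mult[symmetric] ennreal_leI)
      qed
      also have "\<dots> = ennreal (y\<^sup>2) * Hz z"
        unfolding Hz_def by (rule nn_integral_cmult) measurable
      finally show ?thesis using True by simp
    qed simp
  qed
  also have "(\<integral>\<^sup>+z. ennreal (y\<^sup>2) * Hz z \<partial>lborel) = ennreal (y\<^sup>2) * (\<integral>\<^sup>+x. Gf u x \<partial>lborel)"
  proof -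
    have "(\<lambda>z. Hz z) \<in> borel_measurable lborel"
    proof -
      have "(\<lambda>z. \<integral>\<^sup>+x. ennreal ((u (x + z) - u x)\<^sup>2 / z\<^sup>2) \<partial>lborel) \<in> borel_measurable lborel"
        by (rule lborel.borel_measurable_nn_integral) (simp add: split_beta', measurable)
      then show ?thesis unfolding Hz_def .
    qed
    then show ?thesis by (simp add: nn_integral_cmult Hz_int)
  qed
  finally have X_le: "(\<integral>\<^sup>+z. indicator S z * gf z \<partial>lborel) \<le> ennreal (y\<^sup>2) * (\<integral>\<^sup>+x. Gf u x \<partial>lborel)" .
  have "ennreal \<bar>y\<bar> * gf y = (\<integral>\<^sup>+z. gf y * indicator S z \<partial>lborel)"
    using eS by (subst nn_integral_cmult_indicator) (auto simp: mult.commute)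
  also have "\<dots> \<le> (\<integral>\<^sup>+z. 2 * (indicator S z * gf z) + 2 * (indicator S z * gf (y - z)) \<partial>lborel)"
  proof (intro nn_integral_mono)
    fix z
    show "gf y * indicator S z \<le> 2 * (indicator S z * gf z) + 2 * (indicator S z * gf (y - z))"
    proof (cases "z \<in> S")
      case True
      then show ?thesis using gf_tri[of y z] by simp
    qed simp
  qed
  also have "\<dots> = 2 * (\<integral>\<^sup>+z. indicator S z * gf z \<partial>lborel) + 2 * (\<integral>\<^sup>+z. indicator S z * gf (y - z) \<partial>lborel)"
    by (subst nn_integral_add) (auto simp: nn_integral_cmult)
  also have "(\<integral>\<^sup>+z. indicator S z * gf (y - z) \<partial>lborel) = (\<integral>\<^sup>+z. indicator S z * gf z \<partial>lborel)"
  proof -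
    have "(\<integral>\<^sup>+z. indicator S (y - z) * gf (y - z) \<partial>lborel) = (\<integral>\<^sup>+z. indicator S z * gf z \<partial>lborel)"
      by (rule nn_refl[where f="\<lambda>z. indicator S z * gf z"]) measurable
    then show ?thesis by (simp add: Sref)
  qed
  finally have le0: "ennreal \<bar>y\<bar> * gf y \<le> 2 * (\<integral>\<^sup>+z. indicator S z * gf z \<partial>lborel) + 2 * (\<integral>\<^sup>+z. indicator S z * gf z \<partial>lborel)" .
  have le1: "ennreal \<bar>y\<bar> * gf y \<le> 2 * (ennreal (y\<^sup>2) * (\<integral>\<^sup>+x. Gf u x \<partial>lborel)) + 2 * (ennreal (y\<^sup>2) * (\<integral>\<^sup>+x. Gf u x \<partial>lborel))"
    using le0 X_le by (meson add_mono mult_left_mono order_trans zero_le)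
  have e1: "ennreal (y\<^sup>2) = ennreal \<bar>y\<bar> * ennreal \<bar>y\<bar>"
    by (simp add: ennreal_mult[symmetric] power2_eq_square)
  have e2: "ennreal (4 * \<bar>y\<bar>) = 4 * ennreal \<bar>y\<bar>"
    by (simp add: ennreal_mult)
  have "2 * (ennreal (y\<^sup>2) * (\<integral>\<^sup>+x. Gf u x \<partial>lborel)) + 2 * (ennreal (y\<^sup>2) * (\<integral>\<^sup>+x. Gf u x \<partial>lborel))
      = ennreal \<bar>y\<bar> * (ennreal (4 * \<bar>y\<bar>) * (\<integral>\<^sup>+x. Gf u x \<partial>lborel))"
  proof -
    have f: "(2::ennreal) * t + 2 * t = 4 * t" for t
      by (subst distrib_right[symmetric]) simp
    show ?thesis unfolding f e1 e2 by (simp add: mult_ac)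
  qed
  with le1 have "ennreal \<bar>y\<bar> * gf y \<le> ennreal \<bar>y\<bar> * (ennreal (4 * \<bar>y\<bar>) * (\<integral>\<^sup>+x. Gf u x \<partial>lborel))"
    by simp
  then show ?thesis using False by (subst (asm) ennreal_mult_le_mult_iff) auto
qed

lemma Gf_alt: "(\<integral>\<^sup>+t. ennreal ((u t - u s)\<^sup>2 / (t - s)\<^sup>2) \<partial>lborel) = Gf u s"
proof -
  have "(\<integral>\<^sup>+t. ennreal ((u t - u s)\<^sup>2 / (t - s)\<^sup>2) \<partial>lborel) = (\<integral>\<^sup>+z. ennreal ((u (z + s) - u s)\<^sup>2 / (z + s - s)\<^sup>2) \<partial>lborel)"
    by (rule nn_shift[symmetric]) measurable
  then show ?thesis unfolding Gf_def by (simp add: add.commute)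
qed

lemma avg_diff: "ennreal ((P_proj \<tau> u x - v)\<^sup>2) \<le> ennreal (1/\<tau>) * (\<integral>\<^sup>+s. indicator (cellI \<tau> x) s * ennreal ((u s - v)\<^sup>2) \<partial>lborel)"
proof -
  have i1: "integrable lborel (\<lambda>s. indicator (cellI \<tau> x) s * (u s - v))"
  proof -
    have "integrable lborel (\<lambda>s. indicator (cellI \<tau> x) s * u s - v * indicator (cellI \<tau> x) s)"
      using int_cell integrable_cell_ind by auto
    then show ?thesis by (simp add: algebra_simps)
  qed
  have "integral\<^sup>L lborel (\<lambda>s. indicator (cellI \<tau> x) s * (u s - v))
      = integral\<^sup>L lborel (\<lambda>s. indicator (cellI \<tau> x) s * u s - v * indicator (cellI \<tau> x) s)"
    by (simp add: algebra_simps)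
  also have "\<dots> = integral\<^sup>L lborel (\<lambda>s. indicator (cellI \<tau> x) s * u s) - v * \<tau>"
    using int_cell integrable_cell_ind integral_cell_ind by simp
  finally have eq: "P_proj \<tau> u x - v = (1/\<tau>) * integral\<^sup>L lborel (\<lambda>s. indicator (cellI \<tau> x) s * (u s - v))"
    unfolding P_proj_eq[OF tp] using tp by (simp add: field_simps)
  show ?thesis
    unfolding eq by (rule CS_cell) (auto simp: emeasure_cellI tp i1, auto simp: cellI_def)
qed

lemma floor_eqI':
  assumes "real_of_int k * \<tau> \<le> z" "z < (real_of_int k + 1) * \<tau>"
  shows "\<lfloor>z/\<tau>\<rfloor> = k"
proof -
  have "real_of_int k \<le> z/\<tau>" "z/\<tau> < real_of_int k + 1"
    using assms tp pos_le_divide_eq pos_divide_less_eq by blast+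
  then show ?thesis by (intro floor_unique) auto
qed

definition Nset :: "real \<Rightarrow> real set" where
  "Nset y = {x. \<lfloor>x/\<tau>\<rfloor> \<noteq> \<lfloor>(x+y)/\<tau>\<rfloor>}"

lemma Nset_meas[measurable]: "Nset y \<in> sets borel"
proof -
  have "{x \<in> space borel. \<lfloor>x/\<tau>\<rfloor> \<noteq> \<lfloor>(x+y)/\<tau>\<rfloor>} \<in> sets borel" by measurable
  then show ?thesis unfolding Nset_def by simp
qed

lemma Nset_meas_bound: "(\<integral>\<^sup>+x. indicator (Nset y) x * indicator (cellI \<tau> x) s \<partial>lborel) \<le> ennreal \<bar>y\<bar>"
proof -
  define k where "k = \<lfloor>s/\<tau>\<rfloor>"
  define L where "L = (if y \<ge> 0 then (real_of_int k + 1) * \<tau> - y else real_of_int k * \<tau>)"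
  have "(\<integral>\<^sup>+x. indicator (Nset y) x * indicator (cellI \<tau> x) s \<partial>lborel) \<le> (\<integral>\<^sup>+x. indicator {L .. L + \<bar>y\<bar>} x \<partial>lborel)"
  proof (intro nn_integral_mono)
    fix x
    show "indicator (Nset y) x * indicator (cellI \<tau> x) s \<le> (indicator {L .. L + \<bar>y\<bar>} x :: ennreal)"
    proof (cases "x \<in> Nset y \<and> s \<in> cellI \<tau> x")
      case True
      then have fx: "\<lfloor>x/\<tau>\<rfloor> = k" unfolding k_def using cellI_floor[OF tp] by metis
      have b: "real_of_int k * \<tau> \<le> x" "x < (real_of_int k + 1) * \<tau>"
        using floor_bounds[OF tp, of x] fx by auto
      have nf: "\<lfloor>(x+y)/\<tau>\<rfloor> \<noteq> k" using True fx unfolding Nset_def by auto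
      have "x \<in> {L .. L + \<bar>y\<bar>}"
      proof (cases "y \<ge> 0")
        case True
        have "\<not> (x + y < (real_of_int k + 1) * \<tau>)"
          using floor_eqI'[of k "x+y"] nf b True by auto
        then show ?thesis using True b unfolding L_def by auto
      next
        case False
        have "\<not> (real_of_int k * \<tau> \<le> x + y)"
          using floor_eqI'[of k "x+y"] nf b False by auto
        then show ?thesis using False b unfolding L_def by auto
      qed
      then show ?thesis using True by simp
    next
      case False
      then show ?thesis by (auto simp: indicator_def)
    qed
  qed
  also have "\<dots> = ennreal \<bar>y\<bar>" by simp
  finally show ?thesis .
qed

lemma cellI_ind_s[measurable]: "(\<lambda>s. indicator (cellI t x) s :: ennreal) \<in> borel_measurable borel"
  by (rule borel_measurable_indicator) (simp add: cellI_def)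

lemma small_pt:
  assumes y: "\<bar>y\<bar> \<le> \<tau>"
  shows "ennreal ((P_proj \<tau> u x - P_proj \<tau> u (x + y))\<^sup>2)
     \<le> 9 * (\<integral>\<^sup>+s. indicator (Nset y) x * indicator (cellI \<tau> x) s * Gf u s \<partial>lborel)"
proof (cases "x \<in> Nset y")
  case False
  then have "cellI \<tau> x = cellI \<tau> (x + y)" unfolding Nset_def cellI_def by simp
  then have "P_proj \<tau> u x = P_proj \<tau> u (x + y)" unfolding P_proj_eq[OF tp] by simp
  then show ?thesis by simp
next
  case True
  have "ennreal ((P_proj \<tau> u x - P_proj \<tau> u (x + y))\<^sup>2)
      \<le> ennreal (1/\<tau>) * (\<integral>\<^sup>+s. indicator (cellI \<tau> x) s * ennreal ((u s - P_proj \<tau> u (x + y))\<^sup>2) \<partial>lborel)"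
    by (rule avg_diff)
  also have "(\<integral>\<^sup>+s. indicator (cellI \<tau> x) s * ennreal ((u s - P_proj \<tau> u (x + y))\<^sup>2) \<partial>lborel)
      \<le> (\<integral>\<^sup>+s. indicator (cellI \<tau> x) s * (ennreal (9 * \<tau>) * Gf u s) \<partial>lborel)"
  proof (intro nn_integral_mono)
    fix s
    show "indicator (cellI \<tau> x) s * ennreal ((u s - P_proj \<tau> u (x + y))\<^sup>2) \<le> indicator (cellI \<tau> x) s * (ennreal (9 * \<tau>) * Gf u s)"
    proof (cases "s \<in> cellI \<tau> x")
      case True
      have "ennreal ((u s - P_proj \<tau> u (x + y))\<^sup>2) = ennreal ((P_proj \<tau> u (x + y) - u s)\<^sup>2)"
        by (simp add: power2_commute)
      also have "\<dots> \<le> ennreal (1/\<tau>) * (\<integral>\<^sup>+t. indicator (cellI \<tau> (x + y)) t * ennreal ((u t - u s)\<^sup>2) \<partial>lborel)"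
        by (rule avg_diff)
      also have "(\<integral>\<^sup>+t. indicator (cellI \<tau> (x + y)) t * ennreal ((u t - u s)\<^sup>2) \<partial>lborel)
          \<le> (\<integral>\<^sup>+t. ennreal ((3 * \<tau>)\<^sup>2) * ennreal ((u t - u s)\<^sup>2 / (t - s)\<^sup>2) \<partial>lborel)"
      proof (intro nn_integral_mono)
        fix t
        show "indicator (cellI \<tau> (x + y)) t * ennreal ((u t - u s)\<^sup>2) \<le> ennreal ((3 * \<tau>)\<^sup>2) * ennreal ((u t - u s)\<^sup>2 / (t - s)\<^sup>2)"
        proof (cases "t \<in> cellI \<tau> (x + y)")
          case tc: True
          have "\<bar>t - (x + y)\<bar> < \<tau>" by (rule cellI_dist[OF tp tc])
          moreover have "\<bar>s - x\<bar> < \<tau>" by (rule cellI_dist[OF tp \<open>s \<in> cellI \<tau> x\<close>])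
          ultimately have "\<bar>t - s\<bar> \<le> 3 * \<tau>" using y by linarith
          then have "(u t - u s)\<^sup>2 \<le> (3 * \<tau>)\<^sup>2 * ((u t - u s)\<^sup>2 / (t - s)\<^sup>2)"
            by (intro sq_le_scaled) auto
          then show ?thesis using tc by (simp add: ennreal_mult[symmetric] ennreal_leI del: power_mult_distrib)
        qed simp
      qed
      also have "\<dots> = ennreal ((3 * \<tau>)\<^sup>2) * Gf u s"
        by (subst nn_integral_cmult) (auto simp: Gf_alt)
      finally have "ennreal ((u s - P_proj \<tau> u (x + y))\<^sup>2) \<le> ennreal (1/\<tau>) * (ennreal ((3 * \<tau>)\<^sup>2) * Gf u s)"
        by (simp add: mult_left_mono)
      also have "\<dots> = ennreal (9 * \<tau>) * Gf u s"
        using tp by (simp add: mult.assoc[symmetric] ennreal_mult[symmetric] power2_eq_square)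
      finally show ?thesis using True by simp
    qed simp
  qed
  also have "\<dots> = ennreal (9 * \<tau>) * (\<integral>\<^sup>+s. indicator (cellI \<tau> x) s * Gf u s \<partial>lborel)"
    by (subst nn_integral_cmult[symmetric]) (auto simp: mult_ac)
  finally have "ennreal ((P_proj \<tau> u x - P_proj \<tau> u (x + y))\<^sup>2)
      \<le> ennreal (1/\<tau>) * (ennreal (9 * \<tau>) * (\<integral>\<^sup>+s. indicator (cellI \<tau> x) s * Gf u s \<partial>lborel))"
    by (simp add: mult_left_mono)
  also have "\<dots> = 9 * (\<integral>\<^sup>+s. indicator (cellI \<tau> x) s * Gf u s \<partial>lborel)"
    using tp by (simp add: mult.assoc[symmetric] ennreal_mult[symmetric])
  finally show ?thesis using True by simp
qed

lemma small_bound: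
  assumes y: "\<bar>y\<bar> \<le> \<tau>"
  shows "(\<integral>\<^sup>+x. ennreal ((P_proj \<tau> u x - P_proj \<tau> u (x + y))\<^sup>2) \<partial>lborel)
     \<le> ennreal (9 * \<bar>y\<bar>) * (\<integral>\<^sup>+x. Gf u x \<partial>lborel)"
proof -
  have m: "(\<lambda>(x, s). indicator (Nset y) x * indicator (cellI \<tau> x) s * Gf u s) \<in> borel_measurable (lborel \<Otimes>\<^sub>M lborel)"
    unfolding case_prod_beta by measurable
  have "(\<integral>\<^sup>+x. ennreal ((P_proj \<tau> u x - P_proj \<tau> u (x + y))\<^sup>2) \<partial>lborel)
      \<le> (\<integral>\<^sup>+x. 9 * (\<integral>\<^sup>+s. indicator (Nset y) x * indicator (cellI \<tau> x) s * Gf u s \<partial>lborel) \<partial>lborel)"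
    by (intro nn_integral_mono small_pt y)
  also have "\<dots> = 9 * (\<integral>\<^sup>+x. \<integral>\<^sup>+s. indicator (Nset y) x * indicator (cellI \<tau> x) s * Gf u s \<partial>lborel \<partial>lborel)"
    using lborel.borel_measurable_nn_integral[OF m] by (subst nn_integral_cmult) auto
  also have "(\<integral>\<^sup>+x. \<integral>\<^sup>+s. indicator (Nset y) x * indicator (cellI \<tau> x) s * Gf u s \<partial>lborel \<partial>lborel)
      = (\<integral>\<^sup>+s. \<integral>\<^sup>+x. indicator (Nset y) x * indicator (cellI \<tau> x) s * Gf u s \<partial>lborel \<partial>lborel)"
    by (rule lborel_pair.Fubini'[symmetric, OF m])
  also have "\<dots> = (\<integral>\<^sup>+s. (\<integral>\<^sup>+x. indicator (Nset y) x * indicator (cellI \<tau> x) s \<partial>lborel) * Gf u s \<partial>lborel)"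
    by (intro nn_integral_cong nn_integral_multc) auto
  also have "9 * \<dots> \<le> 9 * (\<integral>\<^sup>+s. ennreal \<bar>y\<bar> * Gf u s \<partial>lborel)"
    by (intro mult_left_mono nn_integral_mono mult_right_mono Nset_meas_bound) auto
  also have "(\<integral>\<^sup>+s. ennreal \<bar>y\<bar> * Gf u s \<partial>lborel) = ennreal \<bar>y\<bar> * (\<integral>\<^sup>+s. Gf u s \<partial>lborel)"
    by (rule nn_integral_cmult) measurable
  finally show ?thesis by (simp add: ennreal_mult mult.assoc)
qed

lemma sq3: "((p::real) + q + r)\<^sup>2 \<le> 3 * (p\<^sup>2 + q\<^sup>2 + r\<^sup>2)"
proof -
  have "0 \<le> (p - q)\<^sup>2 + (q - r)\<^sup>2 + (p - r)\<^sup>2" by simp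
  then show ?thesis by (simp add: power2_eq_square algebra_simps)
qed

lemma big_bound:
  assumes y: "\<bar>y\<bar> > \<tau>"
  shows "(\<integral>\<^sup>+x. ennreal ((P_proj \<tau> u x - P_proj \<tau> u (x + y))\<^sup>2) \<partial>lborel)
     \<le> ennreal (18 * \<bar>y\<bar>) * (\<integral>\<^sup>+x. Gf u x \<partial>lborel)"
proof -
  define D where "D = (\<integral>\<^sup>+x. Gf u x \<partial>lborel)"
  define A where "A = (\<integral>\<^sup>+x. ennreal ((P_proj \<tau> u x - u x)\<^sup>2) \<partial>lborel)"
  have "(\<integral>\<^sup>+x. ennreal ((P_proj \<tau> u x - P_proj \<tau> u (x + y))\<^sup>2) \<partial>lborel)
     \<le> (\<integral>\<^sup>+x. 3 * (ennreal ((P_proj \<tau> u x - u x)\<^sup>2) + ennreal ((u (x + y) - u x)\<^sup>2)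
           + ennreal ((P_proj \<tau> u (x + y) - u (x + y))\<^sup>2)) \<partial>lborel)"
  proof (intro nn_integral_mono)
    fix x
    have "(P_proj \<tau> u x - P_proj \<tau> u (x + y))\<^sup>2
       \<le> 3 * ((P_proj \<tau> u x - u x)\<^sup>2 + (u (x + y) - u x)\<^sup>2 + (P_proj \<tau> u (x + y) - u (x + y))\<^sup>2)"
      using sq3[of "P_proj \<tau> u x - u x" "u x - u (x + y)" "u (x + y) - P_proj \<tau> u (x + y)"]
      by (simp add: power2_commute)
    then have "ennreal ((P_proj \<tau> u x - P_proj \<tau> u (x + y))\<^sup>2)
       \<le> ennreal (3 * ((P_proj \<tau> u x - u x)\<^sup>2 + (u (x + y) - u x)\<^sup>2 + (P_proj \<tau> u (x + y) - u (x + y))\<^sup>2))"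
      by (rule ennreal_leI)
    also have "\<dots> = 3 * (ennreal ((P_proj \<tau> u x - u x)\<^sup>2) + ennreal ((u (x + y) - u x)\<^sup>2)
           + ennreal ((P_proj \<tau> u (x + y) - u (x + y))\<^sup>2))"
      by (subst ennreal_mult) (auto simp: ennreal_plus)
    finally show "ennreal ((P_proj \<tau> u x - P_proj \<tau> u (x + y))\<^sup>2)
       \<le> 3 * (ennreal ((P_proj \<tau> u x - u x)\<^sup>2) + ennreal ((u (x + y) - u x)\<^sup>2)
           + ennreal ((P_proj \<tau> u (x + y) - u (x + y))\<^sup>2))" .
  qed
  also have "\<dots> = 3 * (A + gf y + (\<integral>\<^sup>+x. ennreal ((P_proj \<tau> u (x + y) - u (x + y))\<^sup>2) \<partial>lborel))"
    unfolding A_def gf_def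
    by (subst nn_integral_cmult) (auto simp: nn_integral_add)
  also have "(\<integral>\<^sup>+x. ennreal ((P_proj \<tau> u (x + y) - u (x + y))\<^sup>2) \<partial>lborel) = A"
    unfolding A_def by (rule nn_shift[where f="\<lambda>w. ennreal ((P_proj \<tau> u w - u w)\<^sup>2)"]) measurable
  finally have le: "(\<integral>\<^sup>+x. ennreal ((P_proj \<tau> u x - P_proj \<tau> u (x + y))\<^sup>2) \<partial>lborel) \<le> 3 * (A + gf y + A)" .
  have A_le: "A \<le> ennreal \<bar>y\<bar> * D"
    unfolding A_def D_def using au_bound y
    by (meson ennreal_leI less_imp_le mult_right_mono order_trans zero_le)
  have g_le: "gf y \<le> ennreal (4 * \<bar>y\<bar>) * D" unfolding D_def by (rule gf_bound)
  have "3 * (A + gf y + A) \<le> 3 * (ennreal \<bar>y\<bar> * D + ennreal (4 * \<bar>y\<bar>) * D + ennreal \<bar>y\<bar> * D)"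
    by (intro mult_left_mono add_mono A_le g_le) auto
  also have "\<dots> = ennreal (18 * \<bar>y\<bar>) * D"
  proof -
    have "ennreal \<bar>y\<bar> * D + ennreal (4 * \<bar>y\<bar>) * D + ennreal \<bar>y\<bar> * D = ennreal (\<bar>y\<bar> + 4 * \<bar>y\<bar> + \<bar>y\<bar>) * D"
    proof -
      have h: "6 * \<bar>y\<bar> = \<bar>y\<bar> + 4 * \<bar>y\<bar> + \<bar>y\<bar>" by simp
      have "ennreal (\<bar>y\<bar> + 4 * \<bar>y\<bar> + \<bar>y\<bar>) = ennreal \<bar>y\<bar> + ennreal (4 * \<bar>y\<bar>) + ennreal \<bar>y\<bar>"
        by (simp only: ennreal_plus abs_ge_zero add_nonneg_nonneg mult_nonneg_nonneg zero_le_numeral)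
      then show ?thesis by (simp only: h distrib_right)
    qed
    moreover have "ennreal (18 * \<bar>y\<bar>) = ennreal 3 * ennreal (6 * \<bar>y\<bar>)"
      by (subst ennreal_mult[symmetric]) auto
    ultimately show ?thesis by (simp add: mult.assoc)
  qed
  finally show ?thesis using le D_def by simp
qed

lemma diff_bound:
  "(\<integral>\<^sup>+x. ennreal ((P_proj \<tau> u x - P_proj \<tau> u (x + y))\<^sup>2) \<partial>lborel)
     \<le> ennreal (18 * \<bar>y\<bar>) * (\<integral>\<^sup>+x. Gf u x \<partial>lborel)"
proof (cases "\<bar>y\<bar> \<le> \<tau>")
  case True
  have "ennreal (9 * \<bar>y\<bar>) \<le> ennreal (18 * \<bar>y\<bar>)" by (intro ennreal_leI) auto
  then show ?thesis using small_bound[OF True]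
    by (meson mult_right_mono order_trans zero_le)
next
  case False
  then show ?thesis using big_bound by simp
qed

end



theorem proposition3:
  shows "\<exists>C>0. \<forall>\<tau>>0. \<forall>u. H12 u \<longrightarrow>
     H12w (P_proj \<tau> u) \<and>
     L2_norm (P_proj \<tau> u) + H12w_semi (P_proj \<tau> u) \<le> C * (L2_norm u + H12_semi u)"
proof (intro exI[of _ 5] conjI allI impI)
  show "(0::real) < 5" by simp
  fix \<tau> :: real and u :: "real \<Rightarrow> real"
  assume tp: "\<tau> > 0" and H: "H12 u"
  have uL2: "L2_fun u" using H by (simp add: H12_def)
  interpret stp \<tau> u using tp uL2 by unfold_locales
  define P where "P = P_proj \<tau> u"
  have Pm[measurable]: "P \<in> borel_measurable borel" unfolding P_def by (rule a_meas)
  define D where "D = (\<integral>\<^sup>+x. Gf u x \<partial>lborel)"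
  have Dfin: "D < \<infinity>" using H unfolding D_def D_eq[symmetric] H12_def by simp
  define d where "d = enn2real D"
  have Dd: "D = ennreal d" using Dfin unfolding d_def by simp
  have d0: "d \<ge> 0" unfolding d_def by simp
  have semi_u: "H12_semi u = sqrt d" unfolding H12_semi_def d_def D_def D_eq ..
  have iu: "integrable lborel (\<lambda>x. (u x)\<^sup>2)" using uL2 by (simp add: L2_fun_def)
  have Nu: "(\<integral>\<^sup>+x. ennreal ((u x)\<^sup>2) \<partial>lborel) = ennreal (integral\<^sup>L lborel (\<lambda>x. (u x)\<^sup>2))"
    by (rule nn_integral_eq_integral[OF iu]) auto
  have NP: "(\<integral>\<^sup>+x. ennreal ((P x)\<^sup>2) \<partial>lborel) \<le> (\<integral>\<^sup>+x. ennreal ((u x)\<^sup>2) \<partial>lborel)"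
    unfolding P_def by (rule a_sq)
  have NPfin: "(\<integral>\<^sup>+x. ennreal ((P x)\<^sup>2) \<partial>lborel) < \<infinity>"
    using NP Nu by (metis ennreal_less_top order.strict_trans1 infinity_ennreal_def)
  have iP: "integrable lborel (\<lambda>x. (P x)\<^sup>2)"
  proof (rule integrableI_bounded)
    show "(\<lambda>x. (P x)\<^sup>2) \<in> borel_measurable lborel" by measurable
    show "(\<integral>\<^sup>+x. ennreal (norm ((P x)\<^sup>2)) \<partial>lborel) < \<infinity>" using NPfin by simp
  qed
  have L2P: "L2_fun P" unfolding L2_fun_def using iP by simp
  have normP: "L2_norm P \<le> L2_norm u"
  proof -
    have "enn2real (\<integral>\<^sup>+x. ennreal ((P x)\<^sup>2) \<partial>lborel) \<le> enn2real (\<integral>\<^sup>+x. ennreal ((u x)\<^sup>2) \<partial>lborel)"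
      using NP Nu by (intro enn2real_mono) auto
    then show ?thesis by (simp add: L2_norm_nn)
  qed
  define C' where "C' = sqrt (18 * d)"
  have C'mem: "C' \<in> H12w_consts P"
    unfolding H12w_consts_def
  proof (intro CollectI conjI allI)
    show "0 \<le> C'" unfolding C'_def using d0 by simp
    fix y :: real
    have m: "(\<lambda>x. P x - transl y P x) \<in> borel_measurable borel" unfolding transl_def by measurable
    have "(\<integral>\<^sup>+x. ennreal ((P x - transl y P x)\<^sup>2) \<partial>lborel) \<le> ennreal (18 * \<bar>y\<bar>) * D"
      unfolding transl_def P_def D_def by (rule diff_bound)
    also have "\<dots> = ennreal (18 * \<bar>y\<bar> * d)" using Dd d0 by (simp add: ennreal_mult)
    finally have "enn2real (\<integral>\<^sup>+x. ennreal ((P x - transl y P x)\<^sup>2) \<partial>lborel) \<le> 18 * \<bar>y\<bar> * d"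
      using d0 by (metis abs_ge_zero enn2real_ennreal enn2real_mono ennreal_less_top mult_nonneg_nonneg zero_le_numeral)
    then have "L2_norm (\<lambda>x. P x - transl y P x) \<le> sqrt (18 * \<bar>y\<bar> * d)"
      by (simp add: L2_norm_nn[OF m])
    also have "\<dots> = C' * sqrt \<bar>y\<bar>" unfolding C'_def by (simp add: real_sqrt_mult mult_ac)
    finally show "L2_norm (\<lambda>x. P x - transl y P x) \<le> C' * sqrt \<bar>y\<bar>" .
  qed
  have hw: "H12w P" unfolding H12w_def using L2P C'mem by auto
  have semiP: "H12w_semi P \<le> C'"
    unfolding H12w_semi_def
    by (rule cInf_lower[OF C'mem]) (auto simp: bdd_below_def H12w_consts_def intro!: exI[of _ 0])
  have "C' \<le> 5 * sqrt d"
  proof -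
    have "C' = sqrt 18 * sqrt d" unfolding C'_def by (simp add: real_sqrt_mult)
    moreover have "sqrt 18 \<le> (5::real)" by (rule real_le_lsqrt) auto
    ultimately show ?thesis using d0 by (simp add: mult_right_mono)
  qed
  have "L2_norm u \<ge> 0" unfolding L2_norm_def by simp
  show "H12w (P_proj \<tau> u)" using hw unfolding P_def .
  show "L2_norm (P_proj \<tau> u) + H12w_semi (P_proj \<tau> u) \<le> 5 * (L2_norm u + H12_semi u)"
    using normP semiP \<open>C' \<le> 5 * sqrt d\<close> \<open>L2_norm u \<ge> 0\<close> unfolding P_def[symmetric] semi_u distrib_left
    by linarith
qed


end
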